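(* Let $q$ be a power of an odd prime, write $q-1=2^s r$ with $r$ odd, let $c\in\mathbb{F}_q^*$, and $f(X)=c(X^{q+1}-X^2)$ on $\mathbb{F}_{q^2}$. Then for every divisor $d$ of $r$ there are $\frac{\varphi(d)(q-1)}{2\,\mathrm{ord}_{3d}(4)}$ cycles of length $2\,\mathrm{ord}_{3d}(4)$ in the functional graph of $f$, and these are the only cycles of length greater than $1$.
   Context: The functional graph of $f$ is the directed graph on $\mathbb{F}_{q^2}$ with edges $x\to f(x)$. $\varphi$ is Euler's totient function and $\mathrm{ord}_m(n)$ is the multiplicative order of $n$ modulo $m$. *)

theory Defs
  imports "HOL-Number_Theory.Number_Theory"
begin

definition has_least_period :: "('a \<Rightarrow> 'a) \<Rightarrow> nat \<Rightarrow> 'a \<Rightarrow> bool" where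
  "has_least_period f n x \<longleftrightarrow> 0 < n \<and> (f ^^ n) x = x \<and> (\<forall>m. 0 < m \<and> m < n \<longrightarrow> (f ^^ m) x \<noteq> x)"

definition cycles_of_length :: "('a \<Rightarrow> 'a) \<Rightarrow> nat \<Rightarrow> 'a set set" where
  "cycles_of_length f n = {{(f ^^ i) x | i. i < n} | x. has_least_period f n x}"

end

theory Submission
  imports Defs "HOL-Algebra.Multiplicative_Group"
begin

lemma gen_exists: "\<exists>g::'a::{field,finite}. g \<noteq> 0 \<and> (\<forall>x. x \<noteq> 0 \<longrightarrow> (\<exists>i::nat. x = g^i))"
proof -
  define R :: "'a ring" where "R = \<lparr>carrier = UNIV, mult = (*), one = 1, zero = 0, add = (+)\<rparr>"
  have cr: "cring R"
    unfolding R_def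
    apply unfold_locales
    apply (auto simp: field_simps Units_def)
    apply (metis add.commute ab_left_minus)+
    done
  then interpret cring R .
  have "Units R = carrier R - {\<zero>\<^bsub>R\<^esub>}"
    unfolding Units_def R_def apply auto
    by (metis field_class.field_inverse mult.commute)
  then have fR: "field R" by (rule cring_fieldI)
  have pw: "x [^]\<^bsub>R\<^esub> (n::nat) = x ^ n" for x :: 'a and n
    by (induction n) (auto simp: R_def)
  have fin: "finite (carrier R)" by (simp add: R_def)
  from field.finite_field_mult_group_has_gen[OF fR fin]
  obtain a where a: "a \<in> carrier (mult_of R)"
     and gen: "carrier (mult_of R) = {a[^]\<^bsub>R\<^esub>i | i::nat . i \<in> UNIV}"
    by blast
  show ?thesis
  proof (intro exI[of _ a] conjI allI impI)
    show "a \<noteq> 0" using a by (simp add: R_def)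
    fix x :: 'a assume "x \<noteq> 0"
    then have "x \<in> carrier (mult_of R)" by (simp add: R_def)
    then have "x \<in> {a[^]\<^bsub>R\<^esub>i | i::nat . i \<in> UNIV}" using gen by (simp del: carrier_mult_of)
    then obtain i :: nat where "x = a[^]\<^bsub>R\<^esub>i" by blast
    then show "\<exists>i. x = a ^ i" using pw by metis
  qed
qed

lemma funpow_mult_fix:
  assumes "(f ^^ L) x = x" shows "(f ^^ (L * j)) x = x"
proof (induction j)
  case (Suc j)
  have "(f ^^ (L * Suc j)) x = (f ^^ L) ((f ^^ (L * j)) x)"
    by (simp add: funpow_add)
  then show ?case using Suc assms by simp
qed simp

lemma funpow_mod_period:
  assumes "(f ^^ L) x = x" shows "(f ^^ m) x = (f ^^ (m mod L)) x"
proof -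
  have "(f ^^ m) x = (f ^^ (m mod L + L * (m div L))) x" by simp
  also have "\<dots> = (f ^^ (m mod L)) ((f ^^ (L * (m div L))) x)"
    by (simp only: funpow_add comp_apply)
  finally have "(f ^^ m) x = (f ^^ (m mod L)) ((f ^^ (L * (m div L))) x)" .
  then show ?thesis using funpow_mult_fix[OF assms] by simp
qed

definition orb :: "('a \<Rightarrow> 'a) \<Rightarrow> nat \<Rightarrow> 'a \<Rightarrow> 'a set" where
  "orb f L x = {(f ^^ i) x | i. i < L}"

lemma funpow_comm_app: "(f ^^ a) ((f ^^ b) x) = (f ^^ b) ((f ^^ a) x)"
proof -
  have "(f ^^ a) ((f ^^ b) x) = (f ^^ (a + b)) x" by (simp only: funpow_add comp_apply)
  also have "\<dots> = (f ^^ (b + a)) x" by (simp only: add.commute)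
  also have "\<dots> = (f ^^ b) ((f ^^ a) x)" by (simp only: funpow_add comp_apply)
  finally show ?thesis .
qed

lemma orb_sub:
  assumes fx: "(f ^^ L) x = x" and L: "0 < L" and z: "z \<in> orb f L x"
  shows "orb f L z \<subseteq> orb f L x"
proof
  fix w assume "w \<in> orb f L z"
  then obtain j where j: "j < L" "w = (f ^^ j) z" by (auto simp: orb_def)
  obtain i where i: "i < L" "z = (f ^^ i) x" using z by (auto simp: orb_def)
  have "w = (f ^^ (j + i)) x" using i j by (simp add: funpow_add)
  also have "\<dots> = (f ^^ ((j + i) mod L)) x" by (rule funpow_mod_period[OF fx])
  finally show "w \<in> orb f L x" using L by (auto simp: orb_def)
qed

lemma orb_back:
  assumes fx: "(f ^^ L) x = x" and L: "0 < L" and z: "z \<in> orb f L x"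
  shows "x \<in> orb f L z" "(f ^^ L) z = z"
proof -
  obtain i where i: "i < L" "z = (f ^^ i) x" using z by (auto simp: orb_def)
  have "(f ^^ (L - i)) z = (f ^^ (L - i + i)) x" using i by (simp only: funpow_add comp_apply)
  also have "\<dots> = x" using i fx by simp
  finally have e: "(f ^^ (L - i)) z = x" .
  show fz: "(f ^^ L) z = z" using i fx funpow_comm_app[where f=f and a=L and b=i and x=x] by simp
  have "(f ^^ ((L - i) mod L)) z = x" using e funpow_mod_period[OF fz, of "L - i"] by simp
  then show "x \<in> orb f L z" using L by (auto simp: orb_def)
qed

lemma orb_period:
  assumes hx: "has_least_period f L x" and z: "z \<in> orb f L x"
  shows "has_least_period f L z"
proof -
  have fx: "(f ^^ L) x = x" and L: "0 < L" and mn: "\<And>m. 0 < m \<Longrightarrow> m < L \<Longrightarrow> (f ^^ m) x \<noteq> x"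
    using hx by (auto simp: has_least_period_def)
  have fz: "(f ^^ L) z = z" using orb_back[OF fx L z] by simp
  obtain j where j: "x = (f ^^ j) z" using orb_back(1)[OF fx L z] by (auto simp: orb_def)
  have "(f ^^ m) z \<noteq> z" if "0 < m" "m < L" for m
  proof
    assume "(f ^^ m) z = z"
    then have "(f ^^ m) x = x" using j funpow_comm_app[where f=f and a=m and b=j and x=z] by simp
    then show False using mn that by blast
  qed
  then show ?thesis using fz L by (auto simp: has_least_period_def)
qed

lemma orb_card:
  assumes hx: "has_least_period f L x"
  shows "card (orb f L x) = L"
proof -
  have L: "0 < L" using hx by (auto simp: has_least_period_def)
  have "inj_on (\<lambda>i. (f ^^ i) x) {..<L}"
  proof (rule inj_onI)
    fix a b assume a: "a \<in> {..<L}" and b: "b \<in> {..<L}" and e: "(f ^^ a) x = (f ^^ b) x"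
    show "a = b"
    proof (rule ccontr)
      assume "a \<noteq> b"
      then consider "a < b" | "b < a" by linarith
      then show False
      proof cases
        case 1
        have hy: "has_least_period f L ((f ^^ a) x)"
          by (rule orb_period[OF hx]) (use a in \<open>auto simp: orb_def\<close>)
        have "(f ^^ (b - a)) ((f ^^ a) x) = (f ^^ (b - a + a)) x" by (simp only: funpow_add comp_apply)
        then have "(f ^^ (b - a)) ((f ^^ a) x) = (f ^^ b) x" using 1 by simp
        then have "(f ^^ (b - a)) ((f ^^ a) x) = (f ^^ a) x" using e by simp
        then show False using hy 1 b unfolding has_least_period_def by auto
      next
        case 2
        have hy: "has_least_period f L ((f ^^ b) x)"
          by (rule orb_period[OF hx]) (use b in \<open>auto simp: orb_def\<close>)
        have "(f ^^ (a - b)) ((f ^^ b) x) = (f ^^ (a - b + b)) x" by (simp only: funpow_add comp_apply)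
        then have "(f ^^ (a - b)) ((f ^^ b) x) = (f ^^ a) x" using 2 by simp
        then have "(f ^^ (a - b)) ((f ^^ b) x) = (f ^^ b) x" using e by simp
        then show False using hy 2 a unfolding has_least_period_def by auto
      qed
    qed
  qed
  moreover have "orb f L x = (\<lambda>i. (f ^^ i) x) ` {..<L}" by (auto simp: orb_def)
  ultimately show ?thesis by (simp add: card_image)
qed

lemma cycles_card:
  fixes f :: "'a::finite \<Rightarrow> 'a"
  assumes L: "0 < L"
  shows "L * card (cycles_of_length f L) = card {x. has_least_period f L x}"
proof -
  let ?P = "{x. has_least_period f L x}"
  have C: "cycles_of_length f L = orb f L ` ?P"
    by (auto simp: cycles_of_length_def orb_def)
  have U: "\<Union>(orb f L ` ?P) = ?P"
  proof (rule equalityI)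
    show "\<Union>(orb f L ` ?P) \<subseteq> ?P"
    proof (rule subsetI)
      fix y assume "y \<in> \<Union>(orb f L ` ?P)"
      then obtain x where x: "x \<in> ?P" "y \<in> orb f L x" by (rule UN_E)
      then show "y \<in> ?P" using orb_period[of f L x y] by simp
    qed
    show "?P \<subseteq> \<Union>(orb f L ` ?P)"
    proof (rule subsetI)
      fix x assume xP: "x \<in> ?P"
      have "(f ^^ 0) x \<in> orb f L x" unfolding orb_def using L by blast
      then have "x \<in> orb f L x" by simp
      then show "x \<in> \<Union>(orb f L ` ?P)" using xP by (rule UN_I[rotated])
    qed
  qed
  have "L * card (orb f L ` ?P) = card (\<Union>(orb f L ` ?P))"
  proof (rule card_partition)
    show "finite (orb f L ` ?P)" by simp
    show "finite (\<Union>(orb f L ` ?P))" by simp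
    show "\<And>c. c \<in> orb f L ` ?P \<Longrightarrow> card c = L" using orb_card by auto
    show "\<And>c1 c2. c1 \<in> orb f L ` ?P \<Longrightarrow> c2 \<in> orb f L ` ?P \<Longrightarrow> c1 \<noteq> c2 \<Longrightarrow> c1 \<inter> c2 = {}"
    proof -
      fix c1 c2 assume "c1 \<in> orb f L ` ?P" "c2 \<in> orb f L ` ?P" "c1 \<noteq> c2"
      then obtain x y where x: "has_least_period f L x" "c1 = orb f L x"
        and y: "has_least_period f L y" "c2 = orb f L y" by auto
      show "c1 \<inter> c2 = {}"
      proof (rule ccontr)
        assume "c1 \<inter> c2 \<noteq> {}"
        then obtain z where z: "z \<in> orb f L x" "z \<in> orb f L y" using x y by auto
        have fx: "(f ^^ L) x = x" and fy: "(f ^^ L) y = y" using x y by (auto simp: has_least_period_def)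
        have "orb f L z \<subseteq> orb f L x" "orb f L z \<subseteq> orb f L y"
          using orb_sub[OF fx L z(1)] orb_sub[OF fy L z(2)] by auto
        moreover have "orb f L x \<subseteq> orb f L z"
          using orb_sub[OF orb_back(2)[OF fx L z(1)] L orb_back(1)[OF fx L z(1)]] .
        moreover have "orb f L y \<subseteq> orb f L z"
          using orb_sub[OF orb_back(2)[OF fy L z(2)] L orb_back(1)[OF fy L z(2)]] .
        ultimately have "c1 = c2" using x y by auto
        then show False using \<open>c1 \<noteq> c2\<close> by simp
      qed
    qed
  qed
  then show ?thesis using C U by simp
qed


lemma card_zero_finite_ring: "of_nat (card (UNIV :: 'a::{finite,ring_1} set)) = (0::'a)"
proof -
  have "(\<Sum>y\<in>(UNIV::'a set). y + 1) = (\<Sum>y\<in>UNIV. y)"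
    by (rule sum.reindex_bij_witness[of _ "\<lambda>y. y - 1" "\<lambda>y. y + 1"]) auto
  then show ?thesis by (simp add: sum.distrib)
qed

lemma power_card_same: "(x::'a::{finite,field}) ^ card (UNIV :: 'a set) = x"
proof (cases "x = 0")
  case False
  have "x * (\<Prod>y\<in>UNIV-{0}. x * y) = x * x ^ (card (UNIV :: 'a set) - 1) * \<Prod>(UNIV-{0})"
    by (simp add: prod.distrib mult_ac)
  also have "x * x ^ (card (UNIV :: 'a set) - 1) = x ^ Suc (card (UNIV :: 'a set) - 1)"
    by (subst power_Suc) auto
  also have "Suc (card (UNIV :: 'a set) - 1) = card (UNIV :: 'a set)"
    using finite_UNIV_card_ge_0[where ?'a = 'a] by simp
  also have "(\<Prod>y\<in>UNIV-{0}. x * y) = (\<Prod>y\<in>UNIV-{0}. y)"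
    by (rule prod.reindex_bij_witness[of _ "\<lambda>y. y / x" "\<lambda>y. x * y"]) (use False in auto)
  finally show ?thesis
    by simp
qed (use finite_UNIV_card_ge_0[where ?'a = 'a] in auto)

lemma pow_mod_split: "(a::'b::monoid_mult) ^ m = (a ^ t) ^ (m div t) * a ^ (m mod t)"
proof -
  have "a ^ m = a ^ (t * (m div t) + m mod t)" by (simp only: mult_div_mod_eq)
  then show ?thesis by (simp only: power_add power_mult)
qed

lemma ord_least_dvd:
  fixes \<mu> :: "'a::field"
  assumes "\<mu> ^ N = 1" "0 < N"
  shows "\<mu> ^ m = 1 \<longleftrightarrow> (LEAST n. 0 < n \<and> \<mu> ^ n = 1) dvd m"
    and "0 < (LEAST n. 0 < n \<and> \<mu> ^ n = 1)"
proof -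
  let ?o = "LEAST n. 0 < n \<and> \<mu> ^ n = 1"
  have o: "0 < ?o \<and> \<mu> ^ ?o = 1" by (rule LeastI[of _ N]) (use assms in auto)
  then show "0 < ?o" by simp
  show "\<mu> ^ m = 1 \<longleftrightarrow> ?o dvd m"
  proof
    assume m: "\<mu> ^ m = 1"
    have "\<mu> ^ m = \<mu> ^ (?o * (m div ?o) + m mod ?o)" by (simp only: mult_div_mod_eq)
    also have "\<dots> = (\<mu> ^ ?o) ^ (m div ?o) * \<mu> ^ (m mod ?o)" by (simp only: power_add power_mult)
    finally have "\<mu> ^ (m mod ?o) = 1" using m o by simp
    moreover have "m mod ?o < ?o" using o by simp
    moreover have "\<not> (0 < m mod ?o \<and> \<mu> ^ (m mod ?o) = 1)"
      by (rule not_less_Least) (use o in simp)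
    ultimately have "m mod ?o = 0" by auto
    then show "?o dvd m" by auto
  next
    assume "?o dvd m"
    then obtain j where "m = ?o * j" by auto
    then show "\<mu> ^ m = 1" using o by (simp add: power_mult)
  qed
qed

lemma dvd_mult_iff_div_gcd:
  fixes N e m :: nat
  assumes "0 < N"
  shows "N dvd e * m \<longleftrightarrow> N div gcd e N dvd m"
proof -
  define G where "G = gcd e N"
  have G: "0 < G" using assms by (simp add: G_def)
  obtain N' where N': "N = G * N'" by (metis G_def gcd_dvd2 dvdE)
  obtain e' where e': "e = G * e'" by (metis G_def gcd_dvd1 dvdE)
  have cop0: "coprime (e div G) (N div G)" unfolding G_def by (rule div_gcd_coprime) (use assms in auto)
  have "N div G = N'" "e div G = e'" using N' e' G by simp_all
  then have cop: "coprime e' N'" using cop0 by simp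
  have "N dvd e * m \<longleftrightarrow> N' dvd e' * m" using G N' e' by (simp add: mult.assoc)
  also have "\<dots> \<longleftrightarrow> N' dvd m" using cop by (simp add: coprime_dvd_mult_right_iff coprime_commute)
  also have "N' = N div G" using N' G by simp
  finally show ?thesis by (simp add: G_def)
qed


lemma div_div_helper: "d dvd (N::nat) \<Longrightarrow> 0 < N \<Longrightarrow> N div (N div d) = d"
  by (elim dvdE) auto

lemma div_swap_helper: "G dvd (N::nat) \<Longrightarrow> 0 < N \<Longrightarrow> N div G = d \<Longrightarrow> G = N div d"
  by (elim dvdE) auto

lemma div_dvd_self_helper: "d dvd (N::nat) \<Longrightarrow> N div d dvd N"
  by (elim dvdE) auto

locale setting =
  fixes p k q s r :: nat and c :: "'a :: {field, finite}" and f :: "'a \<Rightarrow> 'a"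
  assumes p: "prime p" and podd: "odd p" and k: "k \<ge> 1" and q: "q = p ^ k"
    and card: "card (UNIV :: 'a set) = q ^ 2"
    and qr: "q - 1 = 2 ^ s * r" and rodd: "odd r"
    and cq: "c ^ q = c" and c0: "c \<noteq> 0"
    and fdef: "\<And>x. f x = c * (x ^ (q + 1) - x ^ 2)"
begin

definition N where "N = q^2 - 1"
definition M where "M = q - 1"

lemma p3: "p \<ge> 3"
  using p podd prime_ge_2_nat[OF p] by (cases "p = 2") auto

lemma qodd: "odd q" using podd q by simp

lemma q3: "q \<ge> 3"
proof -
  have "p ^ 1 \<le> p ^ k" using k p3 by (intro power_increasing) auto
  then show ?thesis using p3 q by simp
qed

lemma N_pos: "0 < N"
proof -
  have "3 * 3 \<le> q * q" using q3 mult_le_mono by blast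
  then show ?thesis by (simp add: N_def power2_eq_square)
qed

lemma N_eq: "N = M * (q + 1)"
  by (simp add: N_def M_def power2_eq_square algebra_simps)

lemma twoM_dvd_N: "2 * M dvd N"
proof -
  have "even (q + 1)" using qodd by simp
  then obtain t where "q + 1 = 2 * t" by (rule evenE)
  then show ?thesis by (simp add: N_eq)
qed

lemma M_dvd_N: "M dvd N" using N_eq by simp

lemma M_pos: "0 < M" using q3 by (simp add: M_def)

lemma char_p: "of_nat p = (0::'a)"
proof -
  have "of_nat (card (UNIV :: 'a set)) = (0::'a)" by (rule card_zero_finite_ring)
  then have "(of_nat p :: 'a) ^ (k * 2) = 0" by (simp add: card q power_mult of_nat_power)
  then show ?thesis by simp
qed

lemma CHAR_eq: "CHAR('a) = p"
proof -
  have "CHAR('a) dvd p" using char_p by (simp add: of_nat_eq_0_iff_char_dvd)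
  moreover have "CHAR('a) \<noteq> 1" by simp
  ultimately show ?thesis using p unfolding prime_nat_iff by blast
qed

lemma frob_add: "(x + y :: 'a) ^ q = x ^ q + y ^ q"
  by (rule freshmans_dream') (use CHAR_eq p q in auto)

lemma frob_minus: "(- x :: 'a) ^ q = - (x ^ q)"
  using qodd by (simp add: power_minus_odd)

lemma frob_diff: "(x - y :: 'a) ^ q = x ^ q - y ^ q"
  using frob_add[of x "-y"] frob_minus[of y] by simp

lemma two_ne0: "(2::'a) \<noteq> 0"
proof
  assume "(2::'a) = 0"
  then have "of_nat 2 = (0::'a)" by simp
  then have "p dvd 2" using CHAR_eq by (simp only: of_nat_eq_0_iff_char_dvd)
  then show False using p3 by (auto dest: dvd_imp_le)
qed

lemma frob_2: "(2::'a) ^ q = 2"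
  using frob_add[of 1 1] by simp

lemma frob_frob: "(x ^ q) ^ q = (x::'a)"
  using power_card_same[of x] by (simp add: card power_mult[symmetric] power2_eq_square)

lemma xN: "(x::'a) \<noteq> 0 \<Longrightarrow> x ^ N = 1"
proof -
  assume x: "x \<noteq> 0"
  have "x ^ (N + 1) = x" using power_card_same[of x] card q3 by (simp add: N_def)
  then show ?thesis using x by simp
qed

lemma card_nonzero: "card (UNIV - {0::'a}) = N"
  using card by (simp add: N_def card_Diff_subset)

definition ordF :: "'a \<Rightarrow> nat" where "ordF \<mu> = (LEAST n. 0 < n \<and> \<mu> ^ n = 1)"

lemma ordF_dvd: "\<mu> \<noteq> 0 \<Longrightarrow> \<mu> ^ m = 1 \<longleftrightarrow> ordF \<mu> dvd m"
  unfolding ordF_def using ord_least_dvd(1)[OF xN N_pos] .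

lemma ordF_pos: "\<mu> \<noteq> 0 \<Longrightarrow> 0 < ordF \<mu>"
  unfolding ordF_def using ord_least_dvd(2)[OF xN N_pos] .

lemma ordF_dvd_N: "\<mu> \<noteq> 0 \<Longrightarrow> ordF \<mu> dvd N"
  using ordF_dvd xN by blast

lemma ordF_unique:
  assumes "\<mu> \<noteq> 0" "\<And>m. \<mu> ^ m = 1 \<longleftrightarrow> D dvd m" shows "ordF \<mu> = D"
proof -
  have "ordF \<mu> dvd D" using ordF_dvd[OF assms(1), of D] assms(2)[of D] by simp
  moreover have "D dvd ordF \<mu>" using ordF_dvd[OF assms(1), of "ordF \<mu>"] assms(2)[of "ordF \<mu>"] by simp
  ultimately show ?thesis by (rule dvd_antisym)
qed

definition gg :: 'a where "gg = (SOME g::'a. g \<noteq> 0 \<and> (\<forall>x. x \<noteq> 0 \<longrightarrow> (\<exists>i::nat. x = g^i)))"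

lemma gg: "gg \<noteq> 0" "x \<noteq> 0 \<Longrightarrow> \<exists>i. x = gg ^ i"
  using someI_ex[OF gen_exists] unfolding gg_def by auto

lemma gg_pow_eq_1: "gg ^ m = 1 \<longleftrightarrow> N dvd m"
proof
  assume "N dvd m" then obtain j where "m = N*j" by auto
  then show "gg^m = 1" using xN[OF gg(1)] by (simp add: power_mult)
next
  assume m: "gg ^ m = 1"
  define t where "t = m mod N"
  have "gg ^ m = (gg ^ N) ^ (m div N) * gg ^ t" unfolding t_def by (rule pow_mod_split)
  then have gt: "gg ^ t = 1" using m xN[OF gg(1)] by simp
  show "N dvd m"
  proof (rule ccontr)
    assume "\<not> N dvd m"
    then have t0: "0 < t" "t < N" using N_pos by (auto simp: t_def mod_greater_zero_iff_not_dvd)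
    have "UNIV - {0} \<subseteq> (\<lambda>i. gg ^ i) ` {..<t}"
    proof
      fix x assume "x \<in> UNIV - {0::'a}"
      then obtain i where i: "x = gg ^ i" using gg(2) by auto
      have "gg ^ i = (gg ^ t) ^ (i div t) * gg ^ (i mod t)" by (rule pow_mod_split)
      then have "x = gg ^ (i mod t)" using gt i by simp
      then show "x \<in> (\<lambda>i. gg ^ i) ` {..<t}" using t0 by auto
    qed
    then have "card (UNIV - {0::'a}) \<le> card ((\<lambda>i. gg ^ i) ` {..<t})" by (intro card_mono) simp_all
    also have "\<dots> \<le> t" using card_image_le[of "{..<t}" "\<lambda>i. gg^i"] by simp
    finally show False using card_nonzero t0 by simp
  qed
qed

lemma ordF_gg_pow: "ordF (gg ^ e) = N div gcd e N"
  by (rule ordF_unique) (use gg(1) in \<open>simp_all add: power_mult[symmetric] gg_pow_eq_1 dvd_mult_iff_div_gcd[OF N_pos]\<close>)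

lemma gg_inj: "inj_on (\<lambda>e. gg ^ e) {0<..N}"
proof (rule inj_onI)
  fix a b assume a: "a \<in> {0<..N}" and b: "b \<in> {0<..N}" and e: "gg ^ a = gg ^ b"
  have *: "a = b" if ab: "a \<le> b" and eab: "gg ^ a = gg ^ b" and a: "a \<in> {0<..N}" and b: "b \<in> {0<..N}" for a b
  proof -
    have "gg ^ b = gg ^ (a + (b - a))" using ab by simp
    also have "\<dots> = gg ^ a * gg ^ (b - a)" by (rule power_add)
    finally have "gg ^ a * gg ^ (b - a) = gg ^ a * 1" using eab by simp
    then have "gg ^ (b - a) = 1" using gg(1) by simp
    then have dv: "N dvd (b - a)" by (simp add: gg_pow_eq_1)
    have lt: "b - a < N" using a b by auto
    have "b - a = 0"
    proof (rule ccontr)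
      assume "b - a \<noteq> 0"
      then have "N \<le> b - a" using dv by (intro dvd_imp_le) auto
      then show False using lt by simp
    qed
    then show ?thesis using ab by simp
  qed
  show "a = b"
  proof (cases "a \<le> b")
    case True
    then show ?thesis using *[of a b] a b e by blast
  next
    case False
    then have "b \<le> a" by simp
    then show ?thesis using *[of b a] a b e by simp
  qed
qed

lemma count_ord:
  assumes "d dvd N" shows "card {\<mu>::'a. \<mu> \<noteq> 0 \<and> ordF \<mu> = d} = totient d"
proof -
  have set: "{\<mu>::'a. \<mu> \<noteq> 0 \<and> ordF \<mu> = d} = (\<lambda>e. gg ^ e) ` {e \<in> {0<..N}. gcd e N = N div d}"
  proof
    show "{\<mu>. \<mu> \<noteq> 0 \<and> ordF \<mu> = d} \<subseteq> (\<lambda>e. gg ^ e) ` {e \<in> {0<..N}. gcd e N = N div d}"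
    proof
      fix \<mu> :: 'a assume "\<mu> \<in> {\<mu>. \<mu> \<noteq> 0 \<and> ordF \<mu> = d}"
      then have m0: "\<mu> \<noteq> 0" and md: "ordF \<mu> = d" by auto
      obtain i where i: "\<mu> = gg ^ i" using gg(2)[OF m0] by auto
      define e where "e = (if i mod N = 0 then N else i mod N)"
      have e: "e \<in> {0<..N}" using N_pos by (auto simp: e_def less_imp_le)
      have "gg ^ i = gg ^ e"
      proof -
        have "gg ^ i = (gg ^ N) ^ (i div N) * gg ^ (i mod N)" by (rule pow_mod_split)
        then have "gg ^ i = gg ^ (i mod N)" using xN[OF gg(1)] by simp
        moreover have "gg ^ (i mod N) = gg ^ e" using xN[OF gg(1)] by (simp add: e_def)
        ultimately show ?thesis by simp
      qed
      then have mu: "\<mu> = gg ^ e" using i by simp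
      have "N div gcd e N = d" using md mu ordF_gg_pow by simp
      then have "gcd e N = N div d" using N_pos div_swap_helper[of "gcd e N" N d] by simp
      then show "\<mu> \<in> (\<lambda>e. gg ^ e) ` {e \<in> {0<..N}. gcd e N = N div d}" using e mu by auto
    qed
    show "(\<lambda>e. gg ^ e) ` {e \<in> {0<..N}. gcd e N = N div d} \<subseteq> {\<mu>. \<mu> \<noteq> 0 \<and> ordF \<mu> = d}"
    proof
      fix \<mu> assume "\<mu> \<in> (\<lambda>e. gg ^ e) ` {e \<in> {0<..N}. gcd e N = N div d}"
      then obtain e where e: "gcd e N = N div d" "\<mu> = gg ^ e" by auto
      have "ordF \<mu> = N div (N div d)" using e ordF_gg_pow by simp
      also have "\<dots> = d" using div_div_helper[OF assms N_pos] .
      finally show "\<mu> \<in> {\<mu>. \<mu> \<noteq> 0 \<and> ordF \<mu> = d}" using e gg(1) by simp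
    qed
  qed
  have "card {\<mu>::'a. \<mu> \<noteq> 0 \<and> ordF \<mu> = d} = card {e \<in> {0<..N}. gcd e N = N div d}"
    unfolding set by (rule card_image) (rule inj_on_subset[OF gg_inj], auto)
  also have "\<dots> = totient (N div (N div d))"
    by (rule card_gcd_eq_totient[OF N_pos]) (use assms in \<open>auto simp: div_dvd_self_helper\<close>)
  also have "N div (N div d) = d" using div_div_helper[OF assms N_pos] .
  finally show ?thesis .
qed

lemma count_roots:
  assumes "m dvd N" shows "card {\<mu>::'a. \<mu> \<noteq> 0 \<and> \<mu> ^ m = 1} = m"
proof -
  have m0: "0 < m" using assms N_pos by (auto intro: dvd_pos_nat)
  have "{\<mu>::'a. \<mu> \<noteq> 0 \<and> \<mu> ^ m = 1} = (\<Union>d\<in>{d. d dvd m}. {\<mu>. \<mu> \<noteq> 0 \<and> ordF \<mu> = d})"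
    using ordF_dvd by auto
  then have "card {\<mu>::'a. \<mu> \<noteq> 0 \<and> \<mu> ^ m = 1} = (\<Sum>d\<in>{d. d dvd m}. card {\<mu>::'a. \<mu> \<noteq> 0 \<and> ordF \<mu> = d})"
    by (simp only:) (rule card_UN_disjoint, use m0 in auto)
  also have "\<dots> = (\<Sum>d\<in>{d. d dvd m}. totient d)"
    by (rule sum.cong) (use assms in \<open>auto intro: count_ord dvd_trans\<close>)
  also have "\<dots> = m" by (rule totient_divisor_sum)
  finally show ?thesis .
qed

end

fun Sf :: "nat \<Rightarrow> nat" where
  "Sf 0 = 0" | "Sf (Suc n) = 4 * Sf n + 1"

lemma Sf_odd: "0 < n \<Longrightarrow> odd (Sf n)"
  by (cases n) auto

lemma Sf_3: "3 * Sf n + 1 = 4 ^ n"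
  by (induction n) auto

lemma dvd_Sf_iff:
  assumes n: "0 < n"
  shows "D dvd Sf n \<longleftrightarrow> odd D \<and> ord (3 * D) 4 dvd n"
proof -
  have e: "4 ^ n - 1 = 3 * Sf n" using Sf_3[of n] by simp
  have "[4 ^ n = 1] (mod 3 * D) \<longleftrightarrow> 3 * D dvd (4 ^ n - 1)"
    by (rule cong_altdef_nat) simp
  also have "\<dots> \<longleftrightarrow> D dvd Sf n" unfolding e by simp
  finally have h: "[4 ^ n = 1] (mod 3 * D) \<longleftrightarrow> D dvd Sf n" .
  have *: "D dvd Sf n \<longleftrightarrow> ord (3 * D) 4 dvd n" using h ord_divides by blast
  show ?thesis
  proof
    assume "D dvd Sf n"
    moreover have "odd (Sf n)" using Sf_odd[OF n] .
    ultimately show "odd D \<and> ord (3 * D) 4 dvd n" using * by (auto dest: dvd_trans)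
  qed (use * in auto)
qed

lemma ord_pos_odd:
  assumes "odd D" shows "0 < ord (3 * D) (4::nat)"
proof -
  have c2: "coprime (3 * D) 2" using assms by simp
  then have "coprime (3 * D) 4" using coprime_mult_right_iff[of "3 * D" 2 2] by simp
  then show ?thesis by simp
qed

lemma pow_swap: "((a::'b::comm_monoid_mult) ^ m) ^ n = (a ^ n) ^ m"
  by (metis power_mult mult.commute)

context setting
begin

definition A :: "'a \<Rightarrow> 'a" where "A x = x + x ^ q"
definition Y :: "'a \<Rightarrow> 'a" where "Y x = x ^ q - x"
definition Lam :: "'a \<Rightarrow> 'a" where "Lam x = - (c ^ 3) * A x * (Y x) ^ 2"

lemma Yq: "(Y x) ^ q = - Y x"
  unfolding Y_def by (simp add: frob_diff frob_frob)

lemma Aq: "(A x) ^ q = A x"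
  unfolding A_def by (simp add: frob_add frob_frob add.commute)

lemma f_eq: "f x = c * x * Y x"
  unfolding fdef Y_def by (simp add: power_add power2_eq_square algebra_simps)

lemma Y0: "Y 0 = 0"
  using q3 by (simp add: Y_def)

lemma f0: "f 0 = 0"
  by (simp add: f_eq)

lemma AY_x: "A x - Y x = 2 * x"
  by (simp add: A_def Y_def)

lemma Lamq: "(Lam x) ^ q = Lam x"
proof -
  have "(Lam x) ^ q = (- (c ^ 3)) ^ q * (A x) ^ q * ((Y x) ^ 2) ^ q"
    unfolding Lam_def by (simp only: power_mult_distrib)
  also have "(- (c ^ 3)) ^ q = - (c ^ 3)"
    by (simp add: frob_minus pow_swap[of c 3 q] cq)
  also have "((Y x) ^ 2) ^ q = (Y x) ^ 2"
    by (simp add: pow_swap[of "Y x" 2 q] Yq)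
  finally show ?thesis by (simp add: Aq Lam_def)
qed

lemma Yf: "Y (f x) = - c * A x * Y x"
proof -
  have "Y (f x) = c ^ q * x ^ q * (Y x) ^ q - c * x * Y x"
    by (simp add: Y_def f_eq power_mult_distrib)
  also have "\<dots> = - c * A x * Y x"
    by (simp add: cq Yq A_def algebra_simps)
  finally show ?thesis .
qed

lemma ff: "f (f x) = Lam x * x"
  by (simp add: f_eq[of "f x"] Yf) (simp add: f_eq Lam_def power2_eq_square power3_eq_cube algebra_simps)

lemma scaleA: "\<kappa> ^ q = \<kappa> \<Longrightarrow> A (\<kappa> * x) = \<kappa> * A x"
  by (simp add: A_def power_mult_distrib algebra_simps)

lemma scaleY: "\<kappa> ^ q = \<kappa> \<Longrightarrow> Y (\<kappa> * x) = \<kappa> * Y x"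
  by (simp add: Y_def power_mult_distrib algebra_simps)

lemma Lam_scale: "\<kappa> ^ q = \<kappa> \<Longrightarrow> Lam (\<kappa> * x) = \<kappa> ^ 3 * Lam x"
  by (simp add: Lam_def scaleA scaleY power2_eq_square power3_eq_cube algebra_simps)

lemma Lam_ff: "Lam (f (f x)) = (Lam x) ^ 4"
  by (simp add: ff Lam_scale Lamq power_numeral_reduce)

lemma iter_even: "(f ^^ (2 * n)) x = (Lam x) ^ (Sf n) * x"
proof (induction n arbitrary: x)
  case (Suc n)
  have "(f ^^ (2 * Suc n)) x = (f ^^ (2 * n)) ((f ^^ 2) x)"
    by (simp only: mult_Suc_right add.commute[of 2] funpow_add comp_apply)
  also have "(f ^^ 2) x = f (f x)" by (simp add: numeral_2_eq_2)
  also have "(f ^^ (2 * n)) (f (f x)) = (Lam x ^ 4) ^ Sf n * (Lam x * x)"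
    using Suc.IH[of "f (f x)"] Lam_ff[of x] ff[of x] by simp
  also have "\<dots> = Lam x ^ Sf (Suc n) * x"
    by (simp add: power_mult[symmetric] power_add algebra_simps)
  finally show ?case .
qed simp

lemma Lam_pow_q: "(Lam x ^ j) ^ q = Lam x ^ j"
  by (simp add: pow_swap[of "Lam x" j q] Lamq)

lemma f_scale: "\<kappa> ^ q = \<kappa> \<Longrightarrow> f (\<kappa> * x) = \<kappa> ^ 2 * f x"
  by (simp add: f_eq scaleY power2_eq_square algebra_simps)

lemma Lam_nz:
  assumes "Lam x \<noteq> 0" shows "Y x \<noteq> 0" "x \<noteq> 0" "A x \<noteq> 0"
proof -
  show "Y x \<noteq> 0" using assms by (auto simp: Lam_def)
  then show "x \<noteq> 0" using Y0 by auto
  show "A x \<noteq> 0" using assms by (auto simp: Lam_def)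
qed

lemma iter_odd:
  assumes L0: "Lam x \<noteq> 0" shows "(f ^^ (2 * n + 1)) x \<noteq> x"
proof
  define \<kappa> where "\<kappa> = Lam x ^ Sf n"
  have kq: "\<kappa> ^ q = \<kappa>" unfolding \<kappa>_def by (rule Lam_pow_q)
  assume "(f ^^ (2 * n + 1)) x = x"
  then have "f (\<kappa> * x) = x" by (simp add: iter_even \<kappa>_def)
  then have e0: "\<kappa> ^ 2 * (c * x * Y x) = x" using f_scale[OF kq, of x] f_eq[of x] by simp
  then have "x * (\<kappa> ^ 2 * c * Y x) = x * 1" by (simp add: algebra_simps)
  then have e: "\<kappa> ^ 2 * c * Y x = 1" using Lam_nz(2)[OF L0] by simp
  have "(\<kappa> ^ 2 * c * Y x) ^ q = - (\<kappa> ^ 2 * c * Y x)"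
    by (simp add: power_mult_distrib pow_swap[of \<kappa> 2 q] kq cq Yq)
  then have "(1::'a) = - 1" using e by simp
  then have "(2::'a) = 0" by (metis add_eq_0_iff one_add_one)
  then show False using two_ne0 by simp
qed

lemma iter_zero: "(f ^^ j) 0 = 0"
  by (induction j) (auto simp: f0)

lemma Lam0:
  assumes "Lam x = 0" "2 \<le> m" shows "(f ^^ m) x = 0"
proof -
  obtain j where j: "m = j + 2" using assms(2) by (metis le_add_diff_inverse2)
  have "(f ^^ m) x = (f ^^ j) ((f ^^ 2) x)"
    unfolding j by (simp only: funpow_add comp_apply)
  also have "(f ^^ 2) x = 0" using assms(1) by (simp add: numeral_2_eq_2 ff)
  finally show ?thesis by (simp add: iter_zero)
qed

lemma period_iff:
  assumes L0: "Lam x \<noteq> 0" and m: "0 < m"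
  shows "(f ^^ m) x = x \<longleftrightarrow> even m \<and> odd (ordF (Lam x)) \<and> ord (3 * ordF (Lam x)) 4 dvd (m div 2)"
proof (cases "even m")
  case False
  then have "m = 2 * (m div 2) + 1" by simp
  then have "(f ^^ m) x \<noteq> x" using iter_odd[OF L0, of "m div 2"] by metis
  then show ?thesis using False by simp
next
  case True
  define n where "n = m div 2"
  have mn: "m = 2 * n" using True by (simp add: n_def)
  have n0: "0 < n" using m mn by simp
  have "(f ^^ m) x = x \<longleftrightarrow> Lam x ^ Sf n * x = 1 * x" by (simp add: mn iter_even)
  also have "\<dots> \<longleftrightarrow> Lam x ^ Sf n = 1" using Lam_nz(2)[OF L0] by (simp only: mult_cancel_right) simp
  also have "\<dots> \<longleftrightarrow> ordF (Lam x) dvd Sf n" by (rule ordF_dvd[OF L0])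
  also have "\<dots> \<longleftrightarrow> odd (ordF (Lam x)) \<and> ord (3 * ordF (Lam x)) 4 dvd n" by (rule dvd_Sf_iff[OF n0])
  finally show ?thesis using True by (simp add: n_def)
qed

lemma least_period_iff:
  assumes L1: "1 < L"
  shows "has_least_period f L x \<longleftrightarrow>
    (Lam x \<noteq> 0 \<and> odd (ordF (Lam x)) \<and> L = 2 * ord (3 * ordF (Lam x)) 4)"
proof
  assume H: "has_least_period f L x"
  then have fL: "(f ^^ L) x = x" and mn: "\<And>m. 0 < m \<Longrightarrow> m < L \<Longrightarrow> (f ^^ m) x \<noteq> x"
    by (auto simp: has_least_period_def)
  have L0: "Lam x \<noteq> 0"
  proof
    assume "Lam x = 0"
    then have "(f ^^ L) x = 0" using Lam0 L1 by simp
    then have x0: "x = 0" using fL by simp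
    have "(f ^^ 1) x = x" using x0 f0 by simp
    then show False using mn[of 1] L1 by simp
  qed
  define D where "D = ordF (Lam x)"
  define o' where "o' = ord (3 * D) 4"
  have P: "even L" "odd D" "o' dvd L div 2" using period_iff[OF L0, of L] L1 fL by (auto simp: D_def o'_def)
  have "coprime (3 * D) 4"
  proof -
    have c2: "coprime (3 * D) 2" using P(2) by simp
    then show ?thesis using coprime_mult_right_iff[of "3 * D" 2 2] by simp
  qed
  then have o0: "0 < o'" by (simp add: o'_def)
  have per: "(f ^^ (2 * o')) x = x" using period_iff[OF L0, of "2 * o'"] o0 P(2) by (simp add: D_def o'_def)
  have "\<not> 2 * o' < L" using mn[of "2 * o'"] o0 per by auto
  moreover have "o' \<le> L div 2" using P(3) L1 P(1) by (auto intro: dvd_imp_le)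
  ultimately have "L = 2 * o'" using P(1) by auto
  then show "Lam x \<noteq> 0 \<and> odd (ordF (Lam x)) \<and> L = 2 * ord (3 * ordF (Lam x)) 4"
    using L0 P(2) by (simp add: D_def o'_def)
next
  assume H: "Lam x \<noteq> 0 \<and> odd (ordF (Lam x)) \<and> L = 2 * ord (3 * ordF (Lam x)) 4"
  then have L0: "Lam x \<noteq> 0" by simp
  define D where "D = ordF (Lam x)"
  define o' where "o' = ord (3 * D) 4"
  have HL: "L = 2 * o'" "odd D" using H by (simp_all add: D_def o'_def)
  have o0: "0 < o'" using ord_pos_odd[OF HL(2)] by (simp add: o'_def)
  have "ord (3 * ordF (Lam x)) 4 dvd L div 2" using HL by (simp add: D_def o'_def)
  then have fL: "(f ^^ L) x = x" using period_iff[OF L0, of L] L1 HL by (simp add: D_def)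
  have "(f ^^ m) x \<noteq> x" if "0 < m" "m < L" for m
  proof
    assume "(f ^^ m) x = x"
    then have "even m" "o' dvd m div 2" using period_iff[OF L0 that(1)] by (simp_all add: D_def o'_def)
    moreover have "0 < m div 2" using that \<open>even m\<close> by (auto elim: evenE)
    ultimately have "o' \<le> m div 2" by (auto intro: dvd_imp_le)
    then show False using that HL \<open>even m\<close> by (auto elim: evenE)
  qed
  then show "has_least_period f L x" using fL L1 by (auto simp: has_least_period_def)
qed

end

context setting
begin

lemma q_Suc: "q = Suc M" using q3 by (simp add: M_def)

lemma pow_q_split: "(y::'a) ^ q = y ^ M * y"
proof -
  have "y ^ Suc M = y ^ M * y" by (rule power_Suc2)
  then show ?thesis by (simp only: q_Suc[symmetric])
qed

lemma neg1_ne1: "(-1::'a) \<noteq> 1"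
proof
  assume "(-1::'a) = 1"
  then have "(2::'a) = 0" by (metis add_eq_0_iff one_add_one)
  then show False using two_ne0 by simp
qed

lemma four_ne0: "(4::'a) \<noteq> 0"
proof -
  show ?thesis using two_ne0 mult_eq_0_iff[of "2::'a" 2] by simp
qed

definition IS :: "'a set" where "IS = {y. y \<noteq> 0 \<and> y ^ q = - y}"

lemma card_IS: "card IS = M"
proof -
  have key1: "y ^ q = - y \<longleftrightarrow> y ^ M = -1" if "y \<noteq> 0" for y :: 'a
  proof -
    have "y ^ q = - y \<longleftrightarrow> y ^ M * y = (-1) * y" by (simp add: pow_q_split)
    also have "\<dots> \<longleftrightarrow> y ^ M = -1" using that by (simp only: mult_cancel_right) simp
    finally show ?thesis .
  qed
  have key2: "y ^ (2 * M) = 1 \<longleftrightarrow> y ^ M = 1 \<or> y ^ M = -1" for y :: 'a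
  proof -
    have "y ^ (2 * M) = (y ^ M) ^ 2" by (simp add: power_mult[symmetric] mult.commute)
    then show ?thesis by (simp add: power2_eq_1_iff)
  qed
  have IS_eq: "IS = {y::'a. y \<noteq> 0 \<and> y ^ (2 * M) = 1} - {y. y \<noteq> 0 \<and> y ^ M = 1}"
    using key1 key2 neg1_ne1 by (auto simp: IS_def)
  have sub: "{y::'a. y \<noteq> 0 \<and> y ^ M = 1} \<subseteq> {y::'a. y \<noteq> 0 \<and> y ^ (2 * M) = 1}"
    using key2 by auto
  have "card IS = card {y::'a. y \<noteq> 0 \<and> y ^ (2 * M) = 1} - card {y::'a. y \<noteq> 0 \<and> y ^ M = 1}"
    unfolding IS_eq by (rule card_Diff_subset) (use sub in auto)
  also have "\<dots> = 2 * M - M" using count_roots[OF twoM_dvd_N] count_roots[OF M_dvd_N] by simp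
  finally show ?thesis by simp
qed

lemma fiber_card:
  assumes m0: "\<mu> \<noteq> 0" and mq: "\<mu> ^ q = \<mu>"
  shows "card {x. Lam x = \<mu>} = M"
proof -
  define a where "a y = - \<mu> / (c ^ 3 * y ^ 2)" for y
  define h where "h y = (a y - y) / 2" for y
  have aq: "(a y) ^ q = a y" if "y \<in> IS" for y
  proof -
    have yq: "y ^ q = - y" using that by (simp add: IS_def)
    have "(a y) ^ q = - (\<mu> ^ q) / ((c ^ q) ^ 3 * (y ^ q) ^ 2)"
      by (simp add: a_def power_divide frob_minus power_mult_distrib pow_swap[of _ 3 q] pow_swap[of _ 2 q])
    also have "\<dots> = a y" by (simp add: mq cq yq a_def)
    finally show ?thesis .
  qed
  have hprop: "Y (h y) = y \<and> Lam (h y) = \<mu>" if yI: "y \<in> IS" for y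
  proof -
    have y0: "y \<noteq> 0" and yq: "y ^ q = - y" using yI by (auto simp: IS_def)
    have "(h y) ^ q = ((a y) ^ q - y ^ q) / 2 ^ q" by (simp only: h_def power_divide frob_diff)
    then have hq: "(h y) ^ q = (a y + y) / 2" by (simp add: aq[OF yI] yq frob_2)
    have Yh: "Y (h y) = y" unfolding Y_def hq by (simp add: h_def field_simps two_ne0 four_ne0)
    have Ah: "A (h y) = a y" unfolding A_def hq by (simp add: h_def field_simps two_ne0 four_ne0)
    have "Lam (h y) = \<mu>" by (simp add: Lam_def Yh Ah a_def field_simps c0 y0)
    then show ?thesis using Yh by simp
  qed
  have "bij_betw Y {x. Lam x = \<mu>} IS"
  proof (rule bij_betw_byWitness[where f'=h])
    show "\<forall>x\<in>{x. Lam x = \<mu>}. h (Y x) = x"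
    proof
      fix x assume "x \<in> {x. Lam x = \<mu>}"
      then have L: "Lam x = \<mu>" by simp
      have Y0': "Y x \<noteq> 0" "A x \<noteq> 0" using Lam_nz L m0 by auto
      have "a (Y x) = A x" using L Y0' by (simp add: a_def Lam_def field_simps c0) (metis minus_minus)
      then show "h (Y x) = x" using AY_x[of x] by (simp add: h_def field_simps two_ne0 four_ne0)
    qed
    show "\<forall>y\<in>IS. Y (h y) = y" using hprop by blast
    show "Y ` {x. Lam x = \<mu>} \<subseteq> IS"
    proof
      fix y assume "y \<in> Y ` {x. Lam x = \<mu>}"
      then obtain x where "Lam x = \<mu>" "y = Y x" by auto
      then show "y \<in> IS" using Lam_nz[of x] m0 Yq[of x] by (auto simp: IS_def)
    qed
    show "h ` IS \<subseteq> {x. Lam x = \<mu>}" using hprop by auto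
  qed
  then have "card {x. Lam x = \<mu>} = card IS" by (rule bij_betw_same_card)
  then show ?thesis using card_IS by simp
qed

lemma card_P:
  assumes L1: "1 < L"
  shows "card {x. has_least_period f L x} =
    M * card {\<mu>. \<mu> \<noteq> 0 \<and> \<mu> ^ q = \<mu> \<and> odd (ordF \<mu>) \<and> L = 2 * ord (3 * ordF \<mu>) 4}"
proof -
  define U where "U = {\<mu>. \<mu> \<noteq> 0 \<and> \<mu> ^ q = \<mu> \<and> odd (ordF \<mu>) \<and> L = 2 * ord (3 * ordF \<mu>) 4}"
  have "{x. has_least_period f L x} = (\<Union>\<mu>\<in>U. {x. Lam x = \<mu>})"
    using least_period_iff[OF L1] Lamq by (auto simp: U_def)
  then have "card {x. has_least_period f L x} = (\<Sum>\<mu>\<in>U. card {x. Lam x = \<mu>})"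
    by (simp only:) (rule card_UN_disjoint, auto)
  also have "\<dots> = (\<Sum>\<mu>\<in>U. M)"
    by (rule sum.cong) (auto simp: U_def intro: fiber_card)
  also have "\<dots> = M * card U" by simp
  finally show ?thesis by (simp add: U_def)
qed

lemma r_pos: "0 < r" using rodd by (cases r) auto

lemma M_eq: "M = 2 ^ s * r" using qr by (simp add: M_def)

lemma card_U:
  "card {\<mu>::'a. \<mu> \<noteq> 0 \<and> \<mu> ^ q = \<mu> \<and> odd (ordF \<mu>) \<and> L = 2 * ord (3 * ordF \<mu>) 4} =
   (\<Sum>d \<in> {d. d dvd r \<and> 2 * ord (3 * d) 4 = L}. totient d)"
proof -
  let ?D = "{d. d dvd r \<and> 2 * ord (3 * d) 4 = L}"
  have dvd_iff: "\<mu> ^ q = \<mu> \<longleftrightarrow> ordF \<mu> dvd M" if "\<mu> \<noteq> 0" for \<mu> :: 'a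
  proof -
    have "\<mu> ^ q = \<mu> \<longleftrightarrow> \<mu> ^ M * \<mu> = 1 * \<mu>" by (simp add: pow_q_split)
    also have "\<dots> \<longleftrightarrow> \<mu> ^ M = 1" using that by simp
    also have "\<dots> \<longleftrightarrow> ordF \<mu> dvd M" by (rule ordF_dvd[OF that])
    finally show ?thesis .
  qed
  have odd_dvd: "odd d \<and> d dvd M \<longleftrightarrow> d dvd r" for d
  proof
    assume "odd d \<and> d dvd M"
    then have "coprime d (2 ^ s)" "d dvd 2 ^ s * r" by (auto simp: M_eq)
    then show "d dvd r" using coprime_dvd_mult_right_iff coprime_dvd_mult_left_iff by blast
  next
    assume "d dvd r"
    then show "odd d \<and> d dvd M" using rodd by (auto simp: M_eq dest: dvd_trans)
  qed
  have "{\<mu>::'a. \<mu> \<noteq> 0 \<and> \<mu> ^ q = \<mu> \<and> odd (ordF \<mu>) \<and> L = 2 * ord (3 * ordF \<mu>) 4} =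
      (\<Union>d\<in>?D. {\<mu>. \<mu> \<noteq> 0 \<and> ordF \<mu> = d})"
    using dvd_iff odd_dvd by auto
  then have "card {\<mu>::'a. \<mu> \<noteq> 0 \<and> \<mu> ^ q = \<mu> \<and> odd (ordF \<mu>) \<and> L = 2 * ord (3 * ordF \<mu>) 4} =
      (\<Sum>d\<in>?D. card {\<mu>::'a. \<mu> \<noteq> 0 \<and> ordF \<mu> = d})"
    by (simp only:) (rule card_UN_disjoint, use r_pos in auto)
  also have "\<dots> = (\<Sum>d\<in>?D. totient d)"
  proof (rule sum.cong)
    fix d assume "d \<in> ?D"
    then have "d dvd N" using M_dvd_N odd_dvd[of d] by (auto dest: dvd_trans)
    then show "card {\<mu>::'a. \<mu> \<noteq> 0 \<and> ordF \<mu> = d} = totient d" by (rule count_ord)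
  qed simp
  finally show ?thesis .
qed

lemma main:
  assumes L1: "1 < L"
  shows "real (card (cycles_of_length f L)) =
           (\<Sum>d \<in> {d. d dvd r \<and> 2 * ord (3 * d) 4 = L}.
               real (totient d) * real (q - 1) / real (2 * ord (3 * d) (4::nat)))"
proof -
  let ?D = "{d. d dvd r \<and> 2 * ord (3 * d) 4 = L}"
  let ?C = "card (cycles_of_length f L)"
  let ?T = "\<Sum>d \<in> ?D. real (totient d)"
  have n1: "L * ?C = card {x. has_least_period f L x}"
    using L1 by (intro cycles_card) simp
  have nat_eq: "L * ?C = M * (\<Sum>d \<in> ?D. totient d)"
    unfolding n1 card_P[OF L1] card_U ..
  have "real (L * ?C) = real (M * (\<Sum>d \<in> ?D. totient d))"
    using nat_eq by (rule arg_cong)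
  then have r1: "real L * real ?C = real M * ?T"
    by (simp only: of_nat_mult of_nat_sum)
  have Lpos: "real L \<noteq> 0" using L1 by simp
  have e: "real ?C = real M * ?T / real L"
    using r1 Lpos by (simp add: eq_divide_eq mult.commute)
  have "(\<Sum>d \<in> ?D. real (totient d) * real (q - 1) / real (2 * ord (3 * d) (4::nat)))
      = (\<Sum>d \<in> ?D. real (totient d) * real M / real L)"
  proof (rule sum.cong)
    fix d assume "d \<in> ?D"
    then have "2 * ord (3 * d) 4 = L" by simp
    then show "real (totient d) * real (q - 1) / real (2 * ord (3 * d) (4::nat)) =
      real (totient d) * real M / real L" by (simp add: M_def)
  qed (rule refl)
  also have "\<dots> = ?T * real M / real L"
    by (simp only: sum_divide_distrib[symmetric] sum_distrib_right[symmetric])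
  also have "\<dots> = real M * ?T / real L" by (simp only: mult.commute)
  finally show ?thesis using e by simp
qed

end

theorem theorem9:
  fixes p k q s r :: nat and c :: "'a :: {field, finite}" and f :: "'a \<Rightarrow> 'a"
  assumes "prime p" and "odd p" and "k \<ge> 1" and "q = p ^ k"
    and "card (UNIV :: 'a set) = q ^ 2"
    and "q - 1 = 2 ^ s * r" and "odd r"
    and "c ^ q = c" and "c \<noteq> 0"
    and "\<And>x. f x = c * (x ^ (q + 1) - x ^ 2)"
  shows "\<forall>L > 1. real (card (cycles_of_length f L)) =
           (\<Sum>d \<in> {d. d dvd r \<and> 2 * ord (3 * d) 4 = L}.
               real (totient d) * real (q - 1) / real (2 * ord (3 * d) (4::nat)))"
proof -
  have S: "setting p k q s r c f"
    by (unfold_locales; fact assms)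
  show ?thesis
    apply (intro allI impI)
    by (rule setting.main[OF S])
qed

end
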